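(* One can write, for $\theta>0$, \[f(\theta)=-\theta\ln\theta+f_0(\theta),\qquad j(\theta)=-\tfrac12\ln\theta+j_0(\theta),\] where $f_0$ and $j_0$ are real-analytic on $(0,\infty)$ and extend to real-analytic functions on a neighbourhood of $0$. Moreover \[f_0(0)=\ln 4,\qquad \exp\big(f_0'(0)\big)=\frac{e}{3},\qquad j_0(0)=0.\] Finally, for every integer $k\ge1$, as $\theta\to0^+$, \[f^{(k+1)}(\theta)=O(\theta^{-k}),\qquad j^{(k)}(\theta)=O(\theta^{-k}).\]
   Context: Define $\lambda:[0,\infty)\to(0,1/4]$ by $\lambda(0)=1/4$ and, for $\theta>0$, $\lambda(\theta)$ is the unique $\lambda\in(0,1/4)$ with $-1+\frac{\operatorname{artanh}(\sqrt{1-4\lambda})}{\sqrt{1-4\lambda}}=\theta$. For $\theta>0$ set $f(\theta)=-\ln\lambda(\theta)-2\theta-\theta\ln\big(1-4\lambda(\theta)\big)$ and $j(\theta)=-\tfrac12\ln\big(1-4(\theta+1)\lambda(\theta)\big)+\tfrac12\ln 2$. Superscripts $(k)$ denote $k$-th derivatives in $\theta$. *)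

theory Defs
  imports "HOL-Analysis.Analysis" "HOL-Library.Landau_Symbols"
begin

definition real_analytic_on :: "(real \<Rightarrow> real) \<Rightarrow> real set \<Rightarrow> bool" where
  "real_analytic_on g S \<longleftrightarrow>
     (\<forall>x\<in>S. \<exists>r>0. \<exists>a::nat \<Rightarrow> real. \<forall>y. \<bar>y - x\<bar> < r \<longrightarrow> (\<lambda>n. a n * (y - x) ^ n) sums g y)"

definition lam :: "real \<Rightarrow> real" where
  "lam \<theta> = (if \<theta> = 0 then 1/4 else
     (THE l. 0 < l \<and> l < 1/4 \<and> -1 + artanh (sqrt (1 - 4*l)) / sqrt (1 - 4*l) = \<theta>))"

definition fF :: "real \<Rightarrow> real" where
  "fF \<theta> = - ln (lam \<theta>) - 2*\<theta> - \<theta> * ln (1 - 4 * lam \<theta>)"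

definition jF :: "real \<Rightarrow> real" where
  "jF \<theta> = - (1/2) * ln (1 - 4 * (\<theta> + 1) * lam \<theta>) + (1/2) * ln 2"

end

theory Submission
  imports Defs "HOL-Complex_Analysis.Complex_Analysis"
begin


definition hextat :: "(real \<Rightarrow> real) \<Rightarrow> real \<Rightarrow> bool" where
  "hextat f x \<longleftrightarrow> (\<exists>r>0. \<exists>F. F holomorphic_on ball (complex_of_real x) r \<and>
      (\<forall>y. \<bar>y - x\<bar> < r \<longrightarrow> F (of_real y) = of_real (f y)))"

lemma dist_of_real_ball: "(complex_of_real y \<in> ball (of_real x) r) = (\<bar>y - x\<bar> < r)"
  by (simp add: dist_norm abs_minus_commute flip: of_real_diff)

lemma hextat_series:
  assumes "hextat f x"
  shows "\<exists>r>0. \<exists>a. \<forall>y. \<bar>y - x\<bar> < r \<longrightarrow> (\<lambda>n. a n * (y - x) ^ n) sums f y"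
proof -
  obtain r F where r: "r > 0" and F: "F holomorphic_on ball (complex_of_real x) r"
    and e: "\<And>y. \<bar>y - x\<bar> < r \<Longrightarrow> F (of_real y) = of_real (f y)"
    using assms unfolding hextat_def by blast
  have "(\<lambda>n. Re ((deriv ^^ n) F (of_real x) / fact n) * (y - x) ^ n) sums f y"
    if "\<bar>y - x\<bar> < r" for y
  proof -
    have "(\<lambda>n. (deriv ^^ n) F (of_real x) / fact n * (of_real y - of_real x) ^ n) sums F (of_real y)"
      using holomorphic_power_series[OF F, of "of_real y"] that by (simp add: dist_real_def abs_minus_commute)
    then have "(\<lambda>n. Re ((deriv ^^ n) F (of_real x) / fact n * (of_real y - of_real x) ^ n)) sums Re (F (of_real y))"
      by (rule sums_Re)
    moreover have "\<And>n. Re ((deriv ^^ n) F (of_real x) / fact n * (of_real y - of_real x) ^ n)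
        = Re ((deriv ^^ n) F (of_real x) / fact n) * (y - x) ^ n"
    proof -
      fix n
      have "(deriv ^^ n) F (of_real x) / fact n * (of_real y - of_real x) ^ n
         = ((y - x) ^ n) *\<^sub>R ((deriv ^^ n) F (of_real x) / fact n)"
        by (simp add: scaleR_conv_of_real mult.commute)
      then show "Re ((deriv ^^ n) F (of_real x) / fact n * (of_real y - of_real x) ^ n)
        = Re ((deriv ^^ n) F (of_real x) / fact n) * (y - x) ^ n" by simp
    qed
    ultimately show ?thesis using e[OF that] by simp
  qed
  then show ?thesis using r by (intro exI[of _ r] conjI exI[of _ "\<lambda>n. Re ((deriv ^^ n) F (of_real x) / fact n)"]) auto
qed

lemma hextat_analytic:
  assumes "\<And>x. x \<in> S \<Longrightarrow> hextat f x"
  shows "real_analytic_on f S"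
  using assms hextat_series unfolding real_analytic_on_def by blast

lemma hol_real_deriv:
  assumes F: "F holomorphic_on ball (complex_of_real x) r"
    and e: "\<And>y. \<bar>y - x\<bar> < r \<Longrightarrow> F (of_real y) = of_real (f y)"
    and y: "\<bar>y - x\<bar> < r"
  shows "(f has_real_derivative Re (deriv F (of_real y))) (at y)"
    and "deriv F (of_real y) = of_real (Re (deriv F (of_real y)))"
proof -
  have "(F has_field_derivative deriv F (of_real y)) (at (of_real y))"
    using F y by (intro holomorphic_derivI[of F "ball (complex_of_real x) r"]) (auto simp: dist_real_def abs_minus_commute)
  then have "((\<lambda>t. F (of_real t)) has_vector_derivative deriv F (of_real y)) (at y)"
    by (rule has_vector_derivative_real_field)
  then have d: "((\<lambda>t. complex_of_real (f t)) has_vector_derivative deriv F (of_real y)) (at y)"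
    by (rule has_vector_derivative_transform_within_open[where S="{x-r<..<x+r}"])
       (use y e in \<open>auto simp: abs_less_iff\<close>)
  then show "(f has_real_derivative Re (deriv F (of_real y))) (at y)"
    by (simp add: has_vector_derivative_complex_iff)
  have "((\<lambda>t. 0::real) has_real_derivative Im (deriv F (of_real y))) (at y)"
    using d by (simp add: has_vector_derivative_complex_iff)
  then have "Im (deriv F (of_real y)) = 0"
    using DERIV_const DERIV_unique by blast
  then show "deriv F (of_real y) = of_real (Re (deriv F (of_real y)))"
    by (simp add: complex_eq_iff)
qed

lemma hextat_DERIV:
  assumes "hextat f x" shows "(f has_real_derivative deriv f x) (at x)"
proof -
  obtain r F where r: "r > 0" and F: "F holomorphic_on ball (complex_of_real x) r"
    and e: "\<And>y. \<bar>y - x\<bar> < r \<Longrightarrow> F (of_real y) = of_real (f y)"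
    using assms unfolding hextat_def by blast
  have "(f has_real_derivative Re (deriv F (of_real x))) (at x)"
    using hol_real_deriv(1)[OF F e, of x] r by simp
  then show ?thesis using DERIV_imp_deriv by metis
qed

lemma hextat_isCont: "hextat f x \<Longrightarrow> isCont f x"
  using hextat_DERIV DERIV_isCont by blast

lemma hextat_deriv:
  assumes "hextat f x" shows "hextat (deriv f) x"
proof -
  obtain r F where r: "r > 0" and F: "F holomorphic_on ball (complex_of_real x) r"
    and e: "\<And>y. \<bar>y - x\<bar> < r \<Longrightarrow> F (of_real y) = of_real (f y)"
    using assms unfolding hextat_def by blast
  have "deriv F holomorphic_on ball (complex_of_real x) r"
    using F by (rule holomorphic_deriv) simp
  moreover have "deriv F (of_real y) = of_real (deriv f y)" if "\<bar>y - x\<bar> < r" for y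
  proof -
    have "deriv f y = Re (deriv F (of_real y))"
      using hol_real_deriv(1)[OF F e that] DERIV_imp_deriv by metis
    then show ?thesis using hol_real_deriv(2)[OF F e that] by simp
  qed
  ultimately show ?thesis using r unfolding hextat_def by blast
qed

lemma hextat_funpow: "hextat f x \<Longrightarrow> hextat ((deriv ^^ n) f) x"
  by (induction n) (auto intro: hextat_deriv)

lemma hextat_cong:
  assumes "hextat f x" "d > 0" "\<And>y. \<bar>y - x\<bar> < d \<Longrightarrow> g y = f y"
  shows "hextat g x"
proof -
  obtain r F where r: "r > 0" and F: "F holomorphic_on ball (complex_of_real x) r"
    and e: "\<And>y. \<bar>y - x\<bar> < r \<Longrightarrow> F (of_real y) = of_real (f y)"
    using assms unfolding hextat_def by blast
  have "F holomorphic_on ball (complex_of_real x) (min r d)"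
    using F by (rule holomorphic_on_subset) auto
  then show ?thesis unfolding hextat_def using r assms(2,3) e
    by (intro exI[of _ "min r d"]) auto
qed

lemma hextat_const: "hextat (\<lambda>_. c) x"
  unfolding hextat_def by (rule exI[of _ 1]) (auto intro!: exI[of _ "\<lambda>_. of_real c"])

lemma hextat_id: "hextat (\<lambda>t. t) x"
  unfolding hextat_def by (rule exI[of _ 1]) (auto intro!: exI[of _ "\<lambda>z. z"])

lemma hextat_binop:
  assumes "hextat f x" "hextat g x"
    and hol: "\<And>F G S. F holomorphic_on S \<Longrightarrow> G holomorphic_on S \<Longrightarrow> (\<lambda>z. P (F z) (G z)) holomorphic_on S"
    and pr: "\<And>a b. P (complex_of_real a) (of_real b) = of_real (Q a b)"
  shows "hextat (\<lambda>t. Q (f t) (g t)) x"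
proof -
  obtain r F where r: "r > 0" and F: "F holomorphic_on ball (complex_of_real x) r"
    and e: "\<And>y. \<bar>y - x\<bar> < r \<Longrightarrow> F (of_real y) = of_real (f y)"
    using assms unfolding hextat_def by blast
  obtain r' G where r': "r' > 0" and G: "G holomorphic_on ball (complex_of_real x) r'"
    and e': "\<And>y. \<bar>y - x\<bar> < r' \<Longrightarrow> G (of_real y) = of_real (g y)"
    using assms unfolding hextat_def by blast
  have "F holomorphic_on ball (complex_of_real x) (min r r')"
    using F by (rule holomorphic_on_subset) auto
  moreover have "G holomorphic_on ball (complex_of_real x) (min r r')"
    using G by (rule holomorphic_on_subset) auto
  ultimately have "(\<lambda>z. P (F z) (G z)) holomorphic_on ball (complex_of_real x) (min r r')"
    by (rule hol)
  then show ?thesis unfolding hextat_def using r r' e e' pr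
    by (intro exI[of _ "min r r'"]) auto
qed

lemma hextat_add: "hextat f x \<Longrightarrow> hextat g x \<Longrightarrow> hextat (\<lambda>t. f t + g t) x"
  by (rule hextat_binop[where P="(+)"]) (auto intro: holomorphic_intros)
lemma hextat_diff: "hextat f x \<Longrightarrow> hextat g x \<Longrightarrow> hextat (\<lambda>t. f t - g t) x"
  by (rule hextat_binop[where P="(-)"]) (auto intro: holomorphic_intros)
lemma hextat_mult: "hextat f x \<Longrightarrow> hextat g x \<Longrightarrow> hextat (\<lambda>t. f t * g t) x"
  by (rule hextat_binop[where P="(*)"]) (auto intro: holomorphic_intros)

lemma hextat_compose:
  assumes g: "hextat g x" and f: "hextat f (g x)"
  shows "hextat (\<lambda>t. f (g t)) x"
proof -
  obtain r G where r: "r > 0" and G: "G holomorphic_on ball (complex_of_real x) r"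
    and e: "\<And>y. \<bar>y - x\<bar> < r \<Longrightarrow> G (of_real y) = of_real (g y)"
    using g unfolding hextat_def by blast
  obtain r' F where r': "r' > 0" and F: "F holomorphic_on ball (complex_of_real (g x)) r'"
    and e': "\<And>y. \<bar>y - g x\<bar> < r' \<Longrightarrow> F (of_real y) = of_real (f y)"
    using f unfolding hextat_def by blast
  have "continuous_on (ball (complex_of_real x) r) G"
    using G holomorphic_on_imp_continuous_on by blast
  then obtain d where d: "d > 0" and dd: "\<And>z. z \<in> ball (complex_of_real x) r \<Longrightarrow> dist z (of_real x) < d
      \<Longrightarrow> dist (G z) (G (of_real x)) < r'"
    using r r' unfolding continuous_on_iff by (metis centre_in_ball)
  have Gx: "G (of_real x) = of_real (g x)" using e r by simp
  define \<delta> where "\<delta> = min r d"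
  have sub: "G ` ball (complex_of_real x) \<delta> \<subseteq> ball (complex_of_real (g x)) r'"
  proof
    fix w assume "w \<in> G ` ball (complex_of_real x) \<delta>"
    then obtain z where z: "z \<in> ball (complex_of_real x) \<delta>" "w = G z" by blast
    then show "w \<in> ball (complex_of_real (g x)) r'"
      using dd[of z] Gx by (auto simp: \<delta>_def dist_commute)
  qed
  have "G holomorphic_on ball (complex_of_real x) \<delta>"
    using G by (rule holomorphic_on_subset) (auto simp: \<delta>_def)
  then have "(F \<circ> G) holomorphic_on ball (complex_of_real x) \<delta>"
    using holomorphic_on_compose_gen[OF _ F sub] by blast
  moreover have "(F \<circ> G) (of_real y) = of_real (f (g y))" if "\<bar>y - x\<bar> < \<delta>" for y
  proof -
    have "of_real y \<in> ball (complex_of_real x) \<delta>" using that by (simp add: dist_real_def abs_minus_commute)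
    then have "G (of_real y) \<in> ball (complex_of_real (g x)) r'" using sub by blast
    moreover have "G (of_real y) = of_real (g y)" using e that by (simp add: \<delta>_def)
    ultimately have "\<bar>g y - g x\<bar> < r'" by (simp add: dist_real_def abs_minus_commute)
    then show ?thesis using e' \<open>G (of_real y) = of_real (g y)\<close> by simp
  qed
  ultimately show ?thesis unfolding hextat_def using r d by (intro exI[of _ \<delta>]) (auto simp: \<delta>_def)
qed

lemma hextat_ln_id: assumes "x > 0" shows "hextat ln x"
proof -
  have "Ln holomorphic_on ball (complex_of_real x) x"
  proof (rule holomorphic_on_Ln)
    show "ball (complex_of_real x) x \<inter> \<real>\<^sub>\<le>\<^sub>0 = {}"
    proof (rule ccontr)
      assume "ball (complex_of_real x) x \<inter> \<real>\<^sub>\<le>\<^sub>0 \<noteq> {}"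
      then obtain z where "z \<in> ball (complex_of_real x) x" "z \<in> \<real>\<^sub>\<le>\<^sub>0" by blast
      then obtain t where "t \<le> 0" "z = of_real t" "\<bar>t - x\<bar> < x"
        by (metis dist_of_real_ball nonpos_Reals_cases)
      then show False by linarith
    qed
  qed
  moreover have "Ln (of_real y) = of_real (ln y)" if "\<bar>y - x\<bar> < x" for y
    using that by (intro Ln_of_real) linarith
  ultimately show ?thesis unfolding hextat_def using assms by blast
qed

lemma hextat_ln: "hextat f x \<Longrightarrow> f x > 0 \<Longrightarrow> hextat (\<lambda>t. ln (f t)) x"
  by (rule hextat_compose) (auto intro: hextat_ln_id)

lemma hextat_inverse_id: assumes "x \<noteq> 0" shows "hextat (\<lambda>t. 1 / t) x"
proof -
  have "(\<lambda>z. 1 / z) holomorphic_on ball (complex_of_real x) \<bar>x\<bar>"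
    by (rule holomorphic_intros)+ (auto simp: dist_norm)
  moreover have "1 / (complex_of_real y) = of_real (1 / y)" for y
    by simp
  ultimately show ?thesis unfolding hextat_def using assms by (intro exI[of _ "\<bar>x\<bar>"]) auto
qed

lemma hextat_divide1: "hextat f x \<Longrightarrow> f x \<noteq> 0 \<Longrightarrow> hextat (\<lambda>t. 1 / f t) x"
  by (rule hextat_compose) (auto intro: hextat_inverse_id)

lemma hextat_inv:
  assumes g: "hextat g x0" and dnz: "deriv g x0 \<noteq> 0" and c: "isCont ginv (g x0)"
    and gi: "ginv (g x0) = x0"
    and ev: "e > 0" "\<And>y. \<bar>y - g x0\<bar> < e \<Longrightarrow> g (ginv y) = y"
  shows "hextat ginv (g x0)"
proof -
  obtain r G where r: "r > 0" and G: "G holomorphic_on ball (complex_of_real x0) r"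
    and eG: "\<And>y. \<bar>y - x0\<bar> < r \<Longrightarrow> G (of_real y) = of_real (g y)"
    using g unfolding hextat_def by blast
  have "deriv g x0 = Re (deriv G (of_real x0))"
    using hol_real_deriv(1)[OF G eG, of x0] r DERIV_imp_deriv by force
  then have "deriv G (of_real x0) \<noteq> 0"
    using hol_real_deriv(2)[OF G eG, of x0] r dnz by auto
  then obtain r' where r': "r' > 0" "ball (complex_of_real x0) r' \<subseteq> ball (complex_of_real x0) r"
      "inj_on G (ball (complex_of_real x0) r')"
    using has_complex_derivative_locally_injective[OF G _ open_ball] r by (metis centre_in_ball)
  define B where "B = ball (complex_of_real x0) r'"
  have GB: "G holomorphic_on B" using holomorphic_on_subset[OF G r'(2)] unfolding B_def .
  have oB0: "open B" by (simp add: B_def)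
  have injB: "inj_on G B" using r'(3) by (simp add: B_def)
  obtain Gi where Gi: "Gi holomorphic_on (G ` B)" "\<And>z. z \<in> B \<Longrightarrow> deriv G z * deriv Gi (G z) = 1"
     "\<And>z. z \<in> B \<Longrightarrow> Gi (G z) = z"
    by (rule holomorphic_has_inverse[OF GB oB0 injB]) blast
  have oB: "open (G ` B)" using open_mapping_thm3[OF GB oB0 injB] .
  have "G (of_real x0) \<in> G ` B" using r' unfolding B_def by auto
  moreover have "G (of_real x0) = of_real (g x0)" using eG r by simp
  ultimately obtain \<rho> where \<rho>: "\<rho> > 0" "ball (complex_of_real (g x0)) \<rho> \<subseteq> G ` B"
    using oB open_contains_ball by metis
  obtain \<eta> where \<eta>: "\<eta> > 0" "\<And>y. dist y (g x0) < \<eta> \<Longrightarrow> dist (ginv y) (ginv (g x0)) < min r r'"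
    using c r r' unfolding continuous_at_eps_delta by (metis min_less_iff_conj)
  define \<sigma> where "\<sigma> = min \<rho> (min \<eta> e)"
  have "Gi holomorphic_on ball (complex_of_real (g x0)) \<sigma>"
    using Gi(1) by (rule holomorphic_on_subset) (use \<rho> in \<open>auto simp: \<sigma>_def\<close>)
  moreover have "Gi (of_real y) = of_real (ginv y)" if y: "\<bar>y - g x0\<bar> < \<sigma>" for y
  proof -
    have "\<bar>ginv y - x0\<bar> < min r r'" using \<eta>(2)[of y] y gi by (auto simp: \<sigma>_def dist_real_def)
    then have "of_real (ginv y) \<in> B" "G (of_real (ginv y)) = of_real y"
      using eG[of "ginv y"] ev(2)[of y] y
      by (auto simp: B_def \<sigma>_def dist_real_def abs_minus_commute)
    then show ?thesis using Gi(3) by metis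
  qed
  ultimately show ?thesis unfolding hextat_def using \<rho> \<eta> ev
    by (intro exI[of _ \<sigma>]) (auto simp: \<sigma>_def)
qed



definition hc :: "nat \<Rightarrow> real" where "hc n = 1 / real (2*n+3)"
definition Hs :: "real \<Rightarrow> real" where "Hs y = (\<Sum>n. hc n * y ^ n)"
definition Hc :: "complex \<Rightarrow> complex" where "Hc z = (\<Sum>n. of_real (hc n) * z ^ n)"
definition Gs :: "real \<Rightarrow> real" where "Gs y = y * Hs y"

lemma hc_pos: "hc n > 0" and hc_le: "hc n \<le> 1/3" and hc_le1: "hc n \<le> 1"
  by (auto simp: hc_def field_simps)

lemma summable_hc:
  fixes z :: "'a::{real_normed_field,banach}"
  assumes "norm z < 1" shows "summable (\<lambda>n. of_real (hc n) * z ^ n)"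
proof (rule summable_comparison_test[OF _ summable_geometric[of "norm z"]])
  have a: "\<bar>hc n\<bar> \<le> 1" for n using hc_pos[of n] hc_le1[of n] by simp
  show "\<exists>N. \<forall>n\<ge>N. norm (of_real (hc n) * z ^ n) \<le> norm z ^ n"
    using a by (auto simp: norm_mult norm_power intro!: mult_left_le_one_le zero_le_power exI[of _ 0])
qed (use assms in simp)

lemma summable_hc_real: "\<bar>y\<bar> < 1 \<Longrightarrow> summable (\<lambda>n. hc n * y ^ n)"
  using summable_hc[of y] by simp

lemma Hc_real: "\<bar>y\<bar> < 1 \<Longrightarrow> Hc (of_real y) = of_real (Hs y)"
proof -
  assume y: "\<bar>y\<bar> < 1"
  have "(\<lambda>n. hc n * y ^ n) sums Hs y" unfolding Hs_def using summable_hc_real[OF y] by (rule summable_sums)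
  then have "(\<lambda>n. of_real (hc n * y ^ n) :: complex) sums of_real (Hs y)" by (rule sums_of_real)
  then show ?thesis unfolding Hc_def by (simp add: sums_iff)
qed

lemma Hc_holo: "Hc holomorphic_on ball 0 1"
proof (rule power_series_holomorphic[where a="\<lambda>n. of_real (hc n)"])
  fix w :: complex assume "w \<in> ball 0 1"
  then have "norm w < 1" by simp
  then show "(\<lambda>n. of_real (hc n) * (w - 0) ^ n) sums Hc w"
    unfolding Hc_def using summable_hc[of w] by (simp add: summable_sums)
qed

lemma hextat_Hs: assumes "\<bar>x\<bar> < 1" shows "hextat Hs x"
proof -
  have "Hc holomorphic_on ball (complex_of_real x) (1 - \<bar>x\<bar>)"
  proof (rule holomorphic_on_subset[OF Hc_holo], rule subsetI)
    fix z assume "z \<in> ball (complex_of_real x) (1 - \<bar>x\<bar>)"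
    then have "norm (z - of_real x) < 1 - \<bar>x\<bar>" by (simp add: dist_norm norm_minus_commute)
    moreover have "norm z \<le> norm (complex_of_real x) + norm (z - of_real x)" by (rule norm_triangle_sub)
    ultimately show "z \<in> ball 0 1" by simp
  qed
  moreover have "Hc (of_real y) = of_real (Hs y)" if "\<bar>y - x\<bar> < 1 - \<bar>x\<bar>" for y
    using that by (intro Hc_real) linarith
  ultimately show ?thesis unfolding hextat_def using assms by (intro exI[of _ "1 - \<bar>x\<bar>"]) auto
qed

lemma hextat_Gs: "\<bar>x\<bar> < 1 \<Longrightarrow> hextat Gs x"
  unfolding Gs_def by (intro hextat_mult hextat_id hextat_Hs)

lemma Hs_0: "Hs 0 = 1/3"
  unfolding Hs_def powser_zero by (simp add: hc_def)

lemma Hs_ge: assumes "0 \<le> y" "y < 1" shows "Hs y \<ge> 1/3"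
proof -
  have "sum (\<lambda>n. hc n * y ^ n) {0} \<le> Hs y"
    unfolding Hs_def using assms
    by (intro sum_le_suminf summable_hc_real) (auto intro!: mult_nonneg_nonneg simp: less_imp_le[OF hc_pos])
  then show ?thesis by (simp add: hc_def)
qed

lemma Hs_le: assumes "0 \<le> y" "y < 1" shows "Hs y \<le> 1 / (3 * (1 - y))"
proof -
  have "(\<lambda>n. y ^ n / 3) sums (1 / (1 - y) / 3)"
    using geometric_sums[of y] assms by (intro sums_divide) auto
  have "Hs y \<le> (\<Sum>n. y ^ n / 3)"
    unfolding Hs_def
  proof (rule suminf_le)
    show "hc n * y ^ n \<le> y ^ n / 3" for n
      using mult_right_mono[OF hc_le[of n], of "y ^ n"] assms by simp
    show "summable (\<lambda>n. hc n * y ^ n)" using assms by (intro summable_hc_real) simp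
    show "summable (\<lambda>n. y ^ n / 3)" using \<open>(\<lambda>n. y ^ n / 3) sums _\<close> by (rule sums_summable)
  qed
  also have "\<dots> = 1 / (1 - y) / 3"
    using \<open>(\<lambda>n. y ^ n / 3) sums _\<close> by (simp add: sums_iff)
  also have "\<dots> = 1 / (3 * (1 - y))" by simp
  finally show ?thesis .
qed

lemma Hs_deriv_nonneg: assumes "0 \<le> y" "y < 1" shows "deriv Hs y \<ge> 0"
proof -
  define K where "K = (1 + y) / 2"
  have K: "\<bar>y\<bar> < K" "K < 1" using assms by (auto simp: K_def)
  have "DERIV (\<lambda>x. \<Sum>n. hc n * x ^ n) y :> (\<Sum>n. diffs hc n * y ^ n)"
    using K by (intro termdiffs_strong[of _ K] summable_hc_real) auto
  then have "deriv Hs y = (\<Sum>n. diffs hc n * y ^ n)"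
    unfolding Hs_def[abs_def] by (rule DERIV_imp_deriv)
  also have "\<dots> \<ge> 0"
  proof (rule suminf_nonneg)
    show "summable (\<lambda>n. diffs hc n * y ^ n)"
      using K by (intro termdiff_converges[of _ 1] summable_hc_real) auto
    show "0 \<le> diffs hc n * y ^ n" for n
      using assms by (auto simp: diffs_def less_imp_le[OF hc_pos] intro!: mult_nonneg_nonneg)
  qed
  finally show ?thesis .
qed

lemma DERIV_Gs: assumes "\<bar>y\<bar> < 1" shows "DERIV Gs y :> Hs y + y * deriv Hs y"
proof -
  have "DERIV Hs y :> deriv Hs y" using hextat_DERIV[OF hextat_Hs[OF assms]] .
  then have "DERIV (\<lambda>t. t * Hs t) y :> 1 * Hs y + deriv Hs y * y"
    by (intro DERIV_mult DERIV_ident)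
  then show ?thesis unfolding Gs_def[abs_def] by (simp add: mult.commute)
qed

lemma deriv_Gs: "\<bar>y\<bar> < 1 \<Longrightarrow> deriv Gs y = Hs y + y * deriv Hs y"
  using DERIV_Gs DERIV_imp_deriv by blast

lemma deriv_Gs_0: "deriv Gs 0 = 1/3"
  using deriv_Gs[of 0] Hs_0 by simp

lemma deriv_Gs_pos: assumes "0 \<le> y" "y < 1" shows "deriv Gs y \<ge> 1/3"
  using deriv_Gs[of y] assms Hs_ge[OF assms] Hs_deriv_nonneg[OF assms]
  by (auto intro: add_increasing2 mult_nonneg_nonneg)



lemma artanh_series:
  fixes s :: real assumes s: "0 < s" "s < 1"
  shows "artanh s = s + s^3 * Hs (s^2)"
proof -
  have a: "(\<lambda>n. - ((-s)^n) / of_nat n) sums ln (1 + s)" using s by (intro ln_series') auto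
  have b: "(\<lambda>n. - ((s)^n) / of_nat n) sums ln (1 - s)" using s ln_series'[of "-s"] by simp
  define t where "t = (\<lambda>n::nat. (s^n - (-s)^n) / of_nat n)"
  have c: "t sums (ln (1 + s) - ln (1 - s))"
    unfolding t_def using sums_diff[OF a b] by (simp add: diff_divide_distrib)
  have "(\<lambda>n. sum t {n * 2..<n * 2 + 2}) sums (ln (1 + s) - ln (1 - s))"
    by (rule sums_group[OF c]) simp
  moreover have "sum t {n * 2..<n * 2 + 2} = 2 * s^(2*n+1) / of_nat (2*n+1)" for n
  proof -
    have "{n * 2..<n * 2 + 2} = {2*n, 2*n+1}" by auto
    moreover have "t (2*n) = 0" by (simp add: t_def power_mult)
    moreover have "t (2*n+1) = 2 * s^(2*n+1) / of_nat (2*n+1)"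
      by (simp add: t_def power_mult power_minus')
    ultimately show ?thesis by simp
  qed
  ultimately have d0: "(\<lambda>n. 2 * s^(2*n+1) / of_nat (2*n+1)) sums (ln (1 + s) - ln (1 - s))"
    by simp
  have L: "ln (1 + s) - ln (1 - s) = 2 * artanh s" using s by (simp add: artanh_def ln_div)
  have d: "(\<lambda>n. 2 * s^(2*n+1) / of_nat (2*n+1)) sums (2 * artanh s)"
    using d0 by (simp only: L)
  have e: "(\<lambda>n. 2 * s^(2*(Suc n)+1) / of_nat (2*(Suc n)+1)) sums (2 * artanh s - 2 * s)"
    using d by (subst sums_Suc_iff) simp
  have f: "(\<lambda>n. hc n * (s^2)^n) sums Hs (s^2)"
    unfolding Hs_def using s by (intro summable_sums summable_hc_real) (simp add: power_less_one_iff abs_square_less_1)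
  then have g: "(\<lambda>n. 2 * s^3 * (hc n * (s^2)^n)) sums (2 * s^3 * Hs (s^2))"
    by (rule sums_mult)
  have "(\<lambda>n. 2 * s^3 * (hc n * (s^2)^n)) = (\<lambda>n. 2 * s^(2*(Suc n)+1) / of_nat (2*(Suc n)+1))"
  proof
    fix n
    have "2*(Suc n)+1 = 3 + 2*n" by simp
    then have "s^(2*(Suc n)+1) = s^3 * (s^2)^n" by (metis power_add power_mult)
    then show "2 * s^3 * (hc n * (s^2)^n) = 2 * s^(2*(Suc n)+1) / of_nat (2*(Suc n)+1)"
      by (simp add: hc_def add.commute ac_simps)
  qed
  with g e have "2 * s^3 * Hs (s^2) = 2 * artanh s - 2 * s" using sums_unique2 by metis
  then show ?thesis by simp
qed

lemma Gs_artanh: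
  fixes s :: real assumes s: "0 < s" "s < 1"
  shows "artanh s / s - 1 = Gs (s^2)"
  using artanh_series[OF s] s by (simp add: Gs_def field_simps power2_eq_square power3_eq_cube)

lemma Gs_big: assumes "\<theta> \<ge> 0" shows "\<exists>u. 0 < u \<and> u < 1 \<and> Gs u > \<theta>"
proof -
  define s where "s = tanh (\<theta> + 2)"
  have s: "0 < s" "s < 1" using assms by (auto simp: s_def tanh_real_lt_1)
  have "Gs (s^2) = (\<theta> + 2) / s - 1" using Gs_artanh[OF s] by (simp add: s_def artanh_tanh_real)
  moreover have "(\<theta> + 2) / s \<ge> \<theta> + 2" using s assms by (simp add: le_divide_eq)
  ultimately have "Gs (s^2) > \<theta>" by simp
  moreover have "0 < s^2" "s^2 < 1" using s by (auto simp: power_less_one_iff)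
  ultimately show ?thesis by blast
qed

lemma isCont_pos_nbhd:
  fixes f :: "real \<Rightarrow> real"
  assumes "isCont f x" "f x > 0" shows "\<exists>d>0. \<forall>y. \<bar>y - x\<bar> < d \<longrightarrow> f y > 0"
proof -
  obtain d where "d > 0" "\<And>y. dist y x < d \<Longrightarrow> dist (f y) (f x) < f x"
    using assms unfolding continuous_at_eps_delta by metis
  then have "\<forall>y. \<bar>y - x\<bar> < d \<longrightarrow> f y > 0" by (auto simp: dist_real_def abs_less_iff)
  then show ?thesis using \<open>d > 0\<close> by blast
qed

definition Qf :: "real \<Rightarrow> real" where "Qf u = 1 / Hs u - 1 + u"

lemma hextat_Qf: "\<bar>x\<bar> < 1 \<Longrightarrow> Hs x \<noteq> 0 \<Longrightarrow> hextat Qf x"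
  unfolding Qf_def[abs_def] by (intro hextat_add hextat_diff hextat_const hextat_id hextat_divide1 hextat_Hs)

definition dlP :: "real \<Rightarrow> bool" where
  "dlP d \<longleftrightarrow> 0 < d \<and> d < 1 \<and> (\<forall>y. \<bar>y\<bar> < d \<longrightarrow> deriv Gs y > 0 \<and> Hs y > 0 \<and> Qf y > 0)"

lemma dlP_ex: "\<exists>d. dlP d"
proof -
  have "isCont (deriv Gs) 0" by (intro hextat_isCont hextat_deriv hextat_Gs) simp
  then obtain d1 where d1: "d1 > 0" "\<And>y. \<bar>y\<bar> < d1 \<Longrightarrow> deriv Gs y > 0"
    using isCont_pos_nbhd[where f="deriv Gs" and x=0] deriv_Gs_0 by auto
  have "isCont Hs 0" by (intro hextat_isCont hextat_Hs) simp
  then obtain d2 where d2: "d2 > 0" "\<And>y. \<bar>y\<bar> < d2 \<Longrightarrow> Hs y > 0"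
    using isCont_pos_nbhd[where f=Hs and x=0] Hs_0 by auto
  have "isCont Qf 0" by (intro hextat_isCont hextat_Qf) (auto simp: Hs_0)
  then obtain d3 where d3: "d3 > 0" "\<And>y. \<bar>y\<bar> < d3 \<Longrightarrow> Qf y > 0"
    using isCont_pos_nbhd[where f=Qf and x=0] Hs_0 by (auto simp: Qf_def)
  have "dlP (min (min d1 d2) (min d3 (1/2)))"
    unfolding dlP_def using d1 d2 d3 by auto
  then show ?thesis ..
qed

definition dl :: real where "dl = (SOME d. dlP d)"

lemma dl: "dlP dl" unfolding dl_def using dlP_ex someI_ex by metis

lemma dl_pos: "0 < dl" and dl_lt1: "dl < 1" using dl by (auto simp: dlP_def)

lemma Hs_pos: assumes "-dl < y" "y < 1" shows "Hs y > 0"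
proof (cases "y \<ge> 0")
  case True then show ?thesis using Hs_ge[OF True assms(2)] by simp
next
  case False then show ?thesis using dl assms by (auto simp: dlP_def)
qed

lemma Qf_pos: assumes "-dl < y" "y < 1" shows "Qf y > 0"
proof (cases "y \<ge> 0")
  case True
  have h: "Hs y > 0" using Hs_pos assms by blast
  have "Hs y \<le> 1 / (3 * (1 - y))" using Hs_le True assms by blast
  then have a: "Hs y * (3 * (1 - y)) \<le> 1" using assms by (simp add: pos_le_divide_eq)
  then have "1 / Hs y \<ge> 3 * (1 - y)" using h by (simp add: pos_le_divide_eq mult.commute)
  then show ?thesis using assms unfolding Qf_def by (smt (verit))
next
  case False then show ?thesis using dl assms by (auto simp: dlP_def)
qed

lemma deriv_Gs_pos': assumes "-dl < y" "y < 1" shows "deriv Gs y > 0"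
proof (cases "y \<ge> 0")
  case True then show ?thesis using deriv_Gs_pos[OF True assms(2)] by simp
next
  case False then show ?thesis using dl assms by (auto simp: dlP_def)
qed

lemma Gs_strict: assumes "-dl < a" "a < b" "b < 1" shows "Gs a < Gs b"
proof (rule DERIV_pos_imp_increasing[OF assms(2)])
  fix x assume "a \<le> x" "x \<le> b"
  then have x: "-dl < x" "x < 1" using assms by auto
  then have "\<bar>x\<bar> < 1" using dl_lt1 by auto
  then show "\<exists>y. DERIV Gs x :> y \<and> y > 0"
    using hextat_DERIV[OF hextat_Gs] deriv_Gs_pos'[OF x] by blast
qed

lemma Gs_inj: assumes "-dl < a" "a < 1" "-dl < b" "b < 1" "Gs a = Gs b" shows "a = b"
  using Gs_strict assms by (metis less_irrefl linorder_neqE_linordered_idom)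

lemma Gs_0: "Gs 0 = 0" by (simp add: Gs_def)

definition eps :: real where "eps = - Gs (-dl/2)"

lemma eps_pos: "eps > 0"
  using Gs_strict[of "-dl/2" 0] dl_pos dl_lt1 by (simp add: eps_def Gs_0)

lemma Gs_cont: "continuous_on {a..b} Gs" if "-1 < a" "b < 1"
  using that by (intro continuous_at_imp_continuous_on ballI hextat_isCont hextat_Gs) auto

definition U :: "real \<Rightarrow> real" where "U \<theta> = (THE u. -dl < u \<and> u < 1 \<and> Gs u = \<theta>)"

lemma U_ex: assumes "\<theta> > -eps" shows "\<exists>u. -dl < u \<and> u < 1 \<and> Gs u = \<theta>"
proof -
  obtain b where b: "0 < b" "b < 1" "Gs b > max \<theta> 0" using Gs_big[of "max \<theta> 0"] by auto
  have "\<exists>x. -dl/2 \<le> x \<and> x \<le> b \<and> Gs x = \<theta>"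
    using assms b dl_pos dl_lt1
    by (intro IVT' Gs_cont) (auto simp: eps_def)
  then obtain x where "-dl/2 \<le> x" "x \<le> b" "Gs x = \<theta>" by blast
  then show ?thesis using dl_pos b by (intro exI[of _ x]) auto
qed

lemma U_prop: assumes "\<theta> > -eps" shows "-dl < U \<theta>" "U \<theta> < 1" "Gs (U \<theta>) = \<theta>"
proof -
  have "\<exists>!u. -dl < u \<and> u < 1 \<and> Gs u = \<theta>" using U_ex[OF assms] Gs_inj by blast
  then have "-dl < U \<theta> \<and> U \<theta> < 1 \<and> Gs (U \<theta>) = \<theta>" unfolding U_def by (rule theI')
  then show "-dl < U \<theta>" "U \<theta> < 1" "Gs (U \<theta>) = \<theta>" by auto
qed

lemma U_Gs: assumes "-dl < u" "u < 1" shows "U (Gs u) = u"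
  unfolding U_def using assms Gs_inj by (intro the_equality) auto

lemma U_0: "U 0 = 0" using U_Gs[of 0] dl_pos by (simp add: Gs_0)

lemma hextat_U: assumes "\<theta> > -eps" shows "hextat U \<theta>"
proof -
  define x0 where "x0 = U \<theta>"
  have x0: "-dl < x0" "x0 < 1" "Gs x0 = \<theta>" using U_prop[OF assms] by (auto simp: x0_def)
  have ax0: "\<bar>x0\<bar> < 1" using x0 dl_lt1 by auto
  define d where "d = min ((x0 + dl)/2) ((1 - x0)/2)"
  have d: "d > 0" using x0 by (simp add: d_def)
  have dd: "-dl < z \<and> z < 1" if "\<bar>z - x0\<bar> \<le> d" for z
  proof -
    have "z - x0 \<le> d" "x0 - z \<le> d" using that by (auto simp: abs_le_iff)
    moreover have "2 * d \<le> x0 + dl" unfolding d_def by (simp add: min_def)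
    moreover have "2 * d \<le> 1 - x0" unfolding d_def by (simp add: min_def)
    ultimately show ?thesis using x0 by (intro conjI; linarith)
  qed
  have "isCont U (Gs x0)"
  proof (rule isCont_inverse_function[where f=Gs and g=U and x=x0, OF d])
    fix z assume "\<bar>z - x0\<bar> \<le> d"
    then have z: "-dl < z" "z < 1" using dd by auto
    show "U (Gs z) = z" using U_Gs[OF z] .
  next
    fix z assume "\<bar>z - x0\<bar> \<le> d"
    then have z: "-dl < z" "z < 1" using dd by auto
    show "isCont Gs z" using z dl_lt1 by (intro hextat_isCont hextat_Gs) auto
  qed
  have "hextat U (Gs x0)"
  proof (rule hextat_inv[OF hextat_Gs[OF ax0]])
    show "deriv Gs x0 \<noteq> 0" using deriv_Gs_pos'[OF x0(1,2)] by simp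
    show "isCont U (Gs x0)" by fact
    show "U (Gs x0) = x0" using U_Gs[OF x0(1,2)] .
    show "\<theta> + eps > 0" using assms by simp
    fix y assume "\<bar>y - Gs x0\<bar> < \<theta> + eps"
    then have "y > -eps" using x0 by auto
    then show "Gs (U y) = y" using U_prop by blast
  qed
  then show ?thesis using x0 by simp
qed

lemma DERIV_U0: "DERIV U 0 :> 3"
proof -
  have "DERIV U 0 :> deriv U 0" using hextat_DERIV[OF hextat_U] eps_pos by simp
  then have "DERIV (\<lambda>t. Gs (U t)) 0 :> deriv Gs (U 0) * deriv U 0"
    using hextat_DERIV[OF hextat_Gs, of "U 0"] by (intro DERIV_chain2) (auto simp: U_0)
  then have "DERIV (\<lambda>t. t) 0 :> deriv Gs (U 0) * deriv U 0"
    by (rule has_field_derivative_transform_within_open[where S="{-eps<..}"])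
       (use eps_pos U_prop in auto)
  then have "deriv Gs (U 0) * deriv U 0 = 1" using DERIV_ident DERIV_unique by blast
  then have "deriv U 0 = 3" using deriv_Gs_0 by (simp add: U_0)
  then show ?thesis using \<open>DERIV U 0 :> deriv U 0\<close> by simp
qed



definition f0 :: "real \<Rightarrow> real" where
  "f0 \<theta> = ln 4 - ln (1 - U \<theta>) - 2 * \<theta> + \<theta> * ln (Hs (U \<theta>))"
definition j0 :: "real \<Rightarrow> real" where
  "j0 \<theta> = - (1/2) * ln (Qf (U \<theta>)) + (1/2) * ln 2"

lemma U_abs: "\<theta> > -eps \<Longrightarrow> \<bar>U \<theta>\<bar> < 1"
  using U_prop[of \<theta>] dl_lt1 by auto

lemma hextat_HU: "\<theta> > -eps \<Longrightarrow> hextat (\<lambda>t. Hs (U t)) \<theta>"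
  by (rule hextat_compose[OF hextat_U hextat_Hs]) (auto intro: U_abs)

lemma hextat_f0: assumes "\<theta> > -eps" shows "hextat f0 \<theta>"
proof -
  have a: "hextat (\<lambda>t. ln (1 - U t)) \<theta>"
    using U_prop[OF assms] by (intro hextat_ln hextat_diff hextat_const hextat_U assms) auto
  have b: "hextat (\<lambda>t. ln (Hs (U t))) \<theta>"
    using U_prop[OF assms] by (intro hextat_ln hextat_HU assms Hs_pos) auto
  show ?thesis unfolding f0_def[abs_def]
    by (intro hextat_add hextat_diff hextat_mult hextat_const hextat_id a b)
qed

lemma hextat_j0: assumes "\<theta> > -eps" shows "hextat j0 \<theta>"
proof -
  have "hextat (\<lambda>t. Qf (U t)) \<theta>"
    using U_prop[OF assms] Hs_pos[of "U \<theta>"]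
    by (intro hextat_compose[OF hextat_U[OF assms]] hextat_Qf U_abs assms) auto
  then have a: "hextat (\<lambda>t. ln (Qf (U t))) \<theta>"
    using U_prop[OF assms] Qf_pos by (intro hextat_ln) auto
  show ?thesis unfolding j0_def[abs_def]
    by (intro hextat_add hextat_mult hextat_const a)
qed

lemma f0_0: "f0 0 = ln 4" by (simp add: f0_def U_0)

lemma j0_0: "j0 0 = 0" by (simp add: j0_def U_0 Qf_def Hs_0)

lemma deriv_f0_0: "deriv f0 0 = 1 - ln 3"
proof -
  have d1: "DERIV (\<lambda>t. 1 - U t) 0 :> 0 - 3" by (intro DERIV_diff DERIV_const DERIV_U0)
  have d1': "DERIV (\<lambda>t. ln (1 - U t)) 0 :> inverse (1 - U 0) * (0 - 3)"
    by (rule DERIV_chain2[OF DERIV_ln d1]) (simp add: U_0)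
  have "hextat (\<lambda>t. ln (Hs (U t))) 0"
    using U_prop[of 0] eps_pos by (intro hextat_ln hextat_HU Hs_pos) auto
  then have d2: "DERIV (\<lambda>t. ln (Hs (U t))) 0 :> deriv (\<lambda>t. ln (Hs (U t))) 0" by (rule hextat_DERIV)
  have d3: "DERIV (\<lambda>t. t * ln (Hs (U t))) 0 :> 1 * ln (Hs (U 0)) + deriv (\<lambda>t. ln (Hs (U t))) 0 * 0"
    by (rule DERIV_mult[OF DERIV_ident d2])
  have d4: "DERIV (\<lambda>t. 2 * t) 0 :> 2 * 1" by (intro DERIV_cmult DERIV_ident)
  have "DERIV f0 0 :> 0 - inverse (1 - U 0) * (0 - 3) - 2 * 1 + (1 * ln (Hs (U 0)) + deriv (\<lambda>t. ln (Hs (U t))) 0 * 0)"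
    unfolding f0_def[abs_def]
    by (rule DERIV_add[OF DERIV_diff[OF DERIV_diff[OF DERIV_const d1'] d4] d3])
  moreover have "ln (1/3::real) = - ln 3" by (simp add: ln_div)
  ultimately have "DERIV f0 0 :> 1 - ln 3" by (simp add: U_0 Hs_0)
  then show ?thesis by (rule DERIV_imp_deriv)
qed

lemma exp_deriv_f0: "exp (deriv f0 0) = exp 1 / 3"
  by (simp add: deriv_f0_0 exp_diff)

lemma U_pos: assumes "\<theta> > 0" shows "U \<theta> > 0"
proof (rule ccontr)
  assume "\<not> U \<theta> > 0"
  moreover have "-dl < U \<theta>" "Gs (U \<theta>) = \<theta>" using U_prop[of \<theta>] assms eps_pos by auto
  ultimately have "Gs (U \<theta>) \<le> Gs 0" using Gs_strict[of "U \<theta>" 0] by (cases "U \<theta> = 0") auto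
  then show False using assms \<open>Gs (U \<theta>) = \<theta>\<close> Gs_0 by simp
qed

lemma lam_eq: assumes "\<theta> > 0" shows "lam \<theta> = (1 - U \<theta>) / 4"
proof -
  define u where "u = U \<theta>"
  have u: "0 < u" "u < 1" "Gs u = \<theta>" using U_pos[OF assms] U_prop[of \<theta>] assms eps_pos by (auto simp: u_def)
  have "(THE l. 0 < l \<and> l < 1/4 \<and> -1 + artanh (sqrt (1 - 4*l)) / sqrt (1 - 4*l) = \<theta>) = (1 - u) / 4"
  proof (rule the_equality)
    have s: "0 < sqrt u" "sqrt u < 1" using u by auto
    have "-1 + artanh (sqrt u) / sqrt u = Gs ((sqrt u)^2)" using Gs_artanh[OF s] by simp
    also have "\<dots> = \<theta>" using u by simp
    moreover have c: "1 - 4 * ((1 - u) / 4) = u" by (simp add: field_simps)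
    ultimately show "0 < (1 - u) / 4 \<and> (1 - u) / 4 < 1/4 \<and> -1 + artanh (sqrt (1 - 4*((1 - u) / 4))) / sqrt (1 - 4*((1 - u) / 4)) = \<theta>"
      using u by (simp only: c) simp
  next
    fix l assume l: "0 < l \<and> l < 1/4 \<and> -1 + artanh (sqrt (1 - 4*l)) / sqrt (1 - 4*l) = \<theta>"
    define v where "v = 1 - 4*l"
    have v: "0 < v" "v < 1" using l by (auto simp: v_def)
    have s: "0 < sqrt v" "sqrt v < 1" using v by auto
    have "Gs v = Gs ((sqrt v)^2)" using v by simp
    also have "\<dots> = -1 + artanh (sqrt v) / sqrt v" using Gs_artanh[OF s] by simp
    also have "\<dots> = \<theta>" using l by (simp add: v_def)
    finally have "U \<theta> = v" using U_Gs[of v] v dl_pos by auto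
    then show "l = (1 - u) / 4" by (simp add: u_def v_def)
  qed
  then show ?thesis using assms by (simp add: lam_def u_def)
qed

lemma fF_eq: assumes "\<theta> > 0" shows "fF \<theta> = - \<theta> * ln \<theta> + f0 \<theta>"
proof -
  define u where "u = U \<theta>"
  have u: "0 < u" "u < 1" "Gs u = \<theta>" using U_pos[OF assms] U_prop[of \<theta>] assms eps_pos by (auto simp: u_def)
  have h: "Hs u > 0" using Hs_pos u dl_pos by auto
  have th: "\<theta> = u * Hs u" using u by (simp add: Gs_def)
  have lt: "ln \<theta> = ln u + ln (Hs u)" using th u h by (simp add: ln_mult)
  have l1: "ln ((1 - u) / 4) = ln (1 - u) - ln 4" using u by (simp add: ln_div)
  have c: "1 - 4 * ((1 - u) / 4) = u" by (simp add: field_simps)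
  have "fF \<theta> = - ln ((1 - u) / 4) - 2*\<theta> - \<theta> * ln u"
    by (simp only: fF_def lam_eq[OF assms] u_def[symmetric] c)
  also have "\<dots> = - \<theta> * ln \<theta> + f0 \<theta>"
    unfolding f0_def u_def[symmetric] l1 lt by (simp add: algebra_simps)
  finally show ?thesis .
qed

lemma jF_eq: assumes "\<theta> > 0" shows "jF \<theta> = - (1/2) * ln \<theta> + j0 \<theta>"
proof -
  define u where "u = U \<theta>"
  have u: "0 < u" "u < 1" "Gs u = \<theta>" using U_pos[OF assms] U_prop[of \<theta>] assms eps_pos by (auto simp: u_def)
  have h: "Hs u > 0" using Hs_pos u dl_pos by auto
  have q: "Qf u > 0" using Qf_pos u dl_pos by auto
  have th: "\<theta> = u * Hs u" using u by (simp add: Gs_def)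
  have e: "1 - 4 * (\<theta> + 1) * ((1 - u) / 4) = \<theta> * Qf u"
    using h unfolding Qf_def th by (simp add: field_simps)
  have "jF \<theta> = - (1/2) * ln (\<theta> * Qf u) + (1/2) * ln 2"
    by (simp only: jF_def lam_eq[OF assms] u_def[symmetric] e)
  also have "\<dots> = - (1/2) * ln \<theta> + j0 \<theta>"
    using assms q by (simp add: ln_mult j0_def u_def[symmetric] algebra_simps)
  finally show ?thesis .
qed



lemma iter_deriv_cong:
  assumes "open S" "\<And>x. x \<in> S \<Longrightarrow> f x = g x" "x \<in> S"
  shows "(deriv ^^ n) f x = (deriv ^^ n) g x"
  using assms(3)
proof (induction n arbitrary: x)
  case 0 then show ?case using assms(2) by simp
next
  case (Suc n)
  have "eventually (\<lambda>y. y \<in> S) (nhds x)" using assms(1) Suc.prems by (rule eventually_nhds_in_open)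
  then have "eventually (\<lambda>y. (deriv ^^ n) f y = (deriv ^^ n) g y) (nhds x)"
    by (rule eventually_mono) (use Suc.IH in auto)
  then show ?case by (simp add: deriv_cong_ev)
qed

lemma iter_deriv_add:
  assumes S: "open S" and f: "\<And>x. x \<in> S \<Longrightarrow> hextat f x" and g: "\<And>x. x \<in> S \<Longrightarrow> hextat g x"
  shows "x \<in> S \<Longrightarrow> (deriv ^^ n) (\<lambda>t. f t + g t) x = (deriv ^^ n) f x + (deriv ^^ n) g x"
proof (induction n arbitrary: x)
  case 0 then show ?case by simp
next
  case (Suc n)
  have "(deriv ^^ Suc n) (\<lambda>t. f t + g t) x = deriv ((deriv ^^ n) (\<lambda>t. f t + g t)) x" by simp
  also have "\<dots> = deriv (\<lambda>t. (deriv ^^ n) f t + (deriv ^^ n) g t) x"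
  proof (rule deriv_cong_ev)
    have "eventually (\<lambda>y. y \<in> S) (nhds x)" using S Suc.prems by (rule eventually_nhds_in_open)
    then show "eventually (\<lambda>y. (deriv ^^ n) (\<lambda>t. f t + g t) y = (deriv ^^ n) f y + (deriv ^^ n) g y) (nhds x)"
      by (rule eventually_mono) (use Suc.IH in auto)
  qed simp
  also have "\<dots> = deriv ((deriv ^^ n) f) x + deriv ((deriv ^^ n) g) x"
  proof (rule DERIV_imp_deriv, rule DERIV_add)
    show "DERIV ((deriv ^^ n) f) x :> deriv ((deriv ^^ n) f) x"
      using f[OF Suc.prems] by (intro hextat_DERIV hextat_funpow)
    show "DERIV ((deriv ^^ n) g) x :> deriv ((deriv ^^ n) g) x"
      using g[OF Suc.prems] by (intro hextat_DERIV hextat_funpow)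
  qed
  finally show ?case by simp
qed

lemma DERIV_powinv:
  fixes t K :: real
  assumes "t > 0"
  shows "DERIV (\<lambda>t. K / t ^ m) t :> - (K * real m / t ^ Suc m)"
proof -
  have "DERIV (\<lambda>t. inverse (t ^ m)) t :> - (real m * t ^ (m - Suc 0) * inverse ((t ^ m) ^ Suc (Suc 0)))"
    using assms by (intro DERIV_inverse_fun DERIV_pow) auto
  then have d: "DERIV (\<lambda>t. K * inverse (t ^ m)) t :> K * (- (real m * t ^ (m - Suc 0) * inverse ((t ^ m) ^ Suc (Suc 0))))"
    by (rule DERIV_cmult)
  have eq: "K * (- (real m * t ^ (m - Suc 0) * inverse ((t ^ m) ^ Suc (Suc 0)))) = - (K * real m / t ^ Suc m)"
  proof (cases m)
    case 0 then show ?thesis by simp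
  next
    case (Suc j)
    have e: "(t ^ Suc j) ^ Suc (Suc 0) = t ^ j * t ^ Suc (Suc j)"
      by (simp only: power_mult[symmetric] power_add[symmetric]) simp
    show ?thesis using assms unfolding Suc by (simp only: e) (simp add: field_simps)
  qed
  have fq: "(\<lambda>t. K / t ^ m) = (\<lambda>t. K * inverse (t ^ m))" by (simp add: divide_inverse)
  show ?thesis unfolding fq using d[unfolded eq] .
qed

lemma iter_deriv_ln:
  fixes t c d :: real
  assumes "t > 0"
  shows "(deriv ^^ Suc n) (\<lambda>t. c * ln t + d) t = c * (-1)^n * fact n / t ^ Suc n"
  using assms
proof (induction n arbitrary: t)
  case 0
  have "DERIV (\<lambda>t. c * ln t + d) t :> c * inverse t + 0"
    using 0 by (intro DERIV_add DERIV_cmult DERIV_ln DERIV_const)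
  then show ?case by (simp add: DERIV_imp_deriv divide_inverse)
next
  case (Suc n)
  have "(deriv ^^ Suc (Suc n)) (\<lambda>t. c * ln t + d) t = deriv ((deriv ^^ Suc n) (\<lambda>t. c * ln t + d)) t"
    by simp
  also have "\<dots> = deriv (\<lambda>t. c * (-1)^n * fact n / t ^ Suc n) t"
  proof (rule deriv_cong_ev)
    have "eventually (\<lambda>y. y \<in> {0<..}) (nhds t)" using Suc.prems by (intro eventually_nhds_in_open) auto
    then show "eventually (\<lambda>y. (deriv ^^ Suc n) (\<lambda>t. c * ln t + d) y = c * (-1)^n * fact n / y ^ Suc n) (nhds t)"
      by (rule eventually_mono) (use Suc.IH in auto)
  qed simp
  also have "\<dots> = - (c * (-1)^n * fact n * real (Suc n) / t ^ Suc (Suc n))"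
    using DERIV_powinv[OF Suc.prems] DERIV_imp_deriv by blast
  also have "\<dots> = c * (-1)^Suc n * fact (Suc n) / t ^ Suc (Suc n)"
    using Suc.prems by (simp add: field_simps)
  finally show ?case .
qed

lemma bigo_bound:
  fixes F b :: "real \<Rightarrow> real"
  assumes eq: "\<And>\<theta>. 0 < \<theta> \<Longrightarrow> \<theta> < 1 \<Longrightarrow> F \<theta> = c / \<theta> ^ k + b \<theta>" and cb: "isCont b 0"
  shows "F \<in> O[at_right 0](\<lambda>\<theta>. 1 / \<theta> ^ k)"
proof -
  obtain d where d: "d > 0" "\<And>y. dist y 0 < d \<Longrightarrow> dist (b y) (b 0) < 1"
    using cb unfolding continuous_at_eps_delta by (metis zero_less_one)
  define M where "M = \<bar>b 0\<bar> + 1"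
  have "eventually (\<lambda>\<theta>. norm (F \<theta>) \<le> (\<bar>c\<bar> + M) * norm (1 / \<theta> ^ k)) (at_right 0)"
    unfolding eventually_at_right_field
  proof (intro exI[of _ "min d 1"] conjI allI impI)
    show "min d 1 > (0::real)" using d by simp
    fix \<theta> :: real assume th: "0 < \<theta>" "\<theta> < min d 1"
    have bb: "\<bar>b \<theta>\<bar> \<le> M" using d(2)[of \<theta>] th by (auto simp: dist_real_def M_def)
    have p: "1 \<le> 1 / \<theta> ^ k" using th by (simp add: power_le_one)
    have "norm (F \<theta>) = \<bar>c / \<theta> ^ k + b \<theta>\<bar>" using eq th by simp
    also have "\<dots> \<le> \<bar>c\<bar> * (1 / \<theta> ^ k) + M"
    proof -
      have "\<bar>c / \<theta> ^ k\<bar> = \<bar>c\<bar> * (1 / \<theta> ^ k)" using th by (simp add: abs_divide)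
      then show ?thesis using abs_triangle_ineq[of "c / \<theta> ^ k" "b \<theta>"] bb by linarith
    qed
    also have "\<dots> \<le> \<bar>c\<bar> * (1 / \<theta> ^ k) + M * (1 / \<theta> ^ k)"
      using p M_def by (smt (verit) mult_le_cancel_left1)
    also have "\<dots> = (\<bar>c\<bar> + M) * norm (1 / \<theta> ^ k)" using th by (simp add: field_simps)
    finally show "norm (F \<theta>) \<le> (\<bar>c\<bar> + M) * norm (1 / \<theta> ^ k)" .
  qed
  then show ?thesis by (rule bigoI)
qed



lemma hextat_neg_id: "hextat (\<lambda>t. - t) x"
  by (rule hextat_cong[OF hextat_diff[OF hextat_const hextat_id, of 0] zero_less_one]) simp

lemma hextat_tlnt: "x > 0 \<Longrightarrow> hextat (\<lambda>t. - t * ln t) x"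
  by (intro hextat_mult hextat_neg_id hextat_ln_id)

lemma deriv_tlnt: fixes x :: real assumes "x > 0" shows "deriv (\<lambda>t. - t * ln t) x = (-1) * ln x + (-1)"
proof -
  have "DERIV (\<lambda>t. - t * ln t) x :> (-1) * ln x + inverse x * (- x)"
    using assms by (intro DERIV_mult DERIV_minus DERIV_ident DERIV_ln)
  then show ?thesis using assms by (simp add: DERIV_imp_deriv)
qed

lemma fF_bigo: assumes "k \<ge> 1"
  shows "(deriv ^^ (k+1)) fF \<in> O[at_right (0::real)](\<lambda>\<theta>. 1 / \<theta> ^ k)"
proof -
  obtain n where k: "k = Suc n" using assms by (cases k) auto
  have S: "open {0::real<..}" by simp
  show ?thesis
  proof (rule bigo_bound[where c="(-1) * (-1)^n * fact n" and b="(deriv ^^ (k+1)) f0"])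
    show "isCont ((deriv ^^ (k+1)) f0) 0" using eps_pos by (intro hextat_isCont hextat_funpow hextat_f0) simp
    fix \<theta> :: real assume th: "0 < \<theta>" "\<theta> < 1"
    have thS: "\<theta> \<in> {0::real<..}" using th by simp
    have h1: "\<And>x. x \<in> {0::real<..} \<Longrightarrow> hextat (\<lambda>t. - t * ln t) x" by (rule hextat_tlnt) simp
    have h2: "\<And>x. x \<in> {0::real<..} \<Longrightarrow> hextat f0 x" by (rule hextat_f0) (use eps_pos in simp)
    have "(deriv ^^ (k+1)) fF \<theta> = (deriv ^^ (k+1)) (\<lambda>t. - t * ln t + f0 t) \<theta>"
      by (rule iter_deriv_cong[OF S _ ]) (use fF_eq th in auto)
    also have "\<dots> = (deriv ^^ (k+1)) (\<lambda>t. - t * ln t) \<theta> + (deriv ^^ (k+1)) f0 \<theta>"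
      by (rule iter_deriv_add[OF S h1 h2 thS])
    also have "(deriv ^^ (k+1)) (\<lambda>t. - t * ln t) \<theta> = (deriv ^^ k) (deriv (\<lambda>t. - t * ln t)) \<theta>"
      by (simp only: Suc_eq_plus1[symmetric] funpow_Suc_right o_apply)
    also have "\<dots> = (deriv ^^ k) (\<lambda>t. (-1) * ln t + (-1)) \<theta>"
      by (rule iter_deriv_cong[OF S _ ]) (use deriv_tlnt th in auto)
    also have "\<dots> = (-1) * (-1)^n * fact n / \<theta> ^ k"
      unfolding k by (rule iter_deriv_ln[OF th(1)])
    finally show "(deriv ^^ (k+1)) fF \<theta> = (-1) * (-1)^n * fact n / \<theta> ^ k + (deriv ^^ (k+1)) f0 \<theta>" .
  qed
qed

lemma jF_bigo: assumes "k \<ge> 1"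
  shows "(deriv ^^ k) jF \<in> O[at_right (0::real)](\<lambda>\<theta>. 1 / \<theta> ^ k)"
proof -
  obtain n where k: "k = Suc n" using assms by (cases k) auto
  have S: "open {0::real<..}" by simp
  show ?thesis
  proof (rule bigo_bound[where c="(-(1/2)) * (-1)^n * fact n" and b="(deriv ^^ k) j0"])
    show "isCont ((deriv ^^ k) j0) 0" using eps_pos by (intro hextat_isCont hextat_funpow hextat_j0) simp
    fix \<theta> :: real assume th: "0 < \<theta>" "\<theta> < 1"
    have thS: "\<theta> \<in> {0::real<..}" using th by simp
    have h1: "\<And>x. x \<in> {0::real<..} \<Longrightarrow> hextat (\<lambda>t. (-(1/2)) * ln t + 0) x"
      by (rule hextat_add[OF hextat_mult[OF hextat_const hextat_ln_id] hextat_const]) simp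
    have h2: "\<And>x. x \<in> {0::real<..} \<Longrightarrow> hextat j0 x" by (rule hextat_j0) (use eps_pos in simp)
    have "(deriv ^^ k) jF \<theta> = (deriv ^^ k) (\<lambda>t. ((-(1/2)) * ln t + 0) + j0 t) \<theta>"
      by (rule iter_deriv_cong[OF S _ ]) (use jF_eq th in auto)
    also have "\<dots> = (deriv ^^ k) (\<lambda>t. (-(1/2)) * ln t + 0) \<theta> + (deriv ^^ k) j0 \<theta>"
      by (rule iter_deriv_add[OF S h1 h2 thS])
    also have "(deriv ^^ k) (\<lambda>t. (-(1/2)) * ln t + 0) \<theta> = (-(1/2)) * (-1)^n * fact n / \<theta> ^ k"
      unfolding k by (rule iter_deriv_ln[OF th(1)])
    finally show "(deriv ^^ k) jF \<theta> = (-(1/2)) * (-1)^n * fact n / \<theta> ^ k + (deriv ^^ k) j0 \<theta>" .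
  qed
qed

theorem proposition5:
  shows "\<exists>f0 j0 :: real \<Rightarrow> real. \<exists>\<epsilon>>0.
     real_analytic_on f0 {-\<epsilon><..} \<and> real_analytic_on j0 {-\<epsilon><..} \<and>
     (\<forall>\<theta>>0. fF \<theta> = - \<theta> * ln \<theta> + f0 \<theta>) \<and>
     (\<forall>\<theta>>0. jF \<theta> = - (1/2) * ln \<theta> + j0 \<theta>) \<and>
     f0 0 = ln 4 \<and> exp (deriv f0 0) = exp 1 / 3 \<and> j0 0 = 0 \<and>
     (\<forall>k::nat. k \<ge> 1 \<longrightarrow>
        (deriv ^^ (k+1)) fF \<in> O[at_right (0::real)](\<lambda>\<theta>. 1 / \<theta> ^ k) \<and>
        (deriv ^^ k) jF \<in> O[at_right (0::real)](\<lambda>\<theta>. 1 / \<theta> ^ k))"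
proof (rule exI[of _ f0], rule exI[of _ j0], rule exI[of _ eps], intro conjI allI impI)
  show "eps > 0" by (rule eps_pos)
  show "real_analytic_on f0 {-eps<..}" by (rule hextat_analytic) (auto intro: hextat_f0)
  show "real_analytic_on j0 {-eps<..}" by (rule hextat_analytic) (auto intro: hextat_j0)
  show "fF \<theta> = - \<theta> * ln \<theta> + f0 \<theta>" if "\<theta> > 0" for \<theta> using fF_eq that .
  show "jF \<theta> = - (1/2) * ln \<theta> + j0 \<theta>" if "\<theta> > 0" for \<theta> using jF_eq that .
  show "f0 0 = ln 4" by (rule f0_0)
  show "exp (deriv f0 0) = exp 1 / 3" by (rule exp_deriv_f0)
  show "j0 0 = 0" by (rule j0_0)
  show "(deriv ^^ (k+1)) fF \<in> O[at_right (0::real)](\<lambda>\<theta>. 1 / \<theta> ^ k)" if "k \<ge> 1" for k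
    using fF_bigo that .
  show "(deriv ^^ k) jF \<in> O[at_right (0::real)](\<lambda>\<theta>. 1 / \<theta> ^ k)" if "k \<ge> 1" for k
    using jF_bigo that .
qed

end
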